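(* Let $\mathcal{H}=(V,H,\bm{w})$ be a finite, connected, weighted undirected hypergraph in which every hyperedge has at least two vertices. (i) For any distinct $u,v\in V$ with $\kappa(u,v)>0$, $$d(u,v)\le\frac{2\max_{h\in H}w_h}{\kappa(u,v)}.$$ (ii) If there is $\kappa>0$ with $\kappa(u,v)\ge\kappa$ for every well-transported pair $\{u,v\}$, then $$\mathrm{diam}(\mathcal{H})\le\frac{2\max_{h\in H}w_h}{\kappa}.$$
   Context: A weighted undirected hypergraph $\mathcal{H}=(V,H,\bm{w})$ has a finite vertex set $V$, a finite set $H$ of hyperedges (subsets of $V$), and positive weights $w_h>0$. Distinct vertices $u,v$ are adjacent ($u\sim v$) if some hyperedge contains both; $\Gamma(x)=\{z: z\sim x\}$; $\mathrm{Deg}(x)=\sum_{h\ni x}w_h$. A hyperpath connecting $u$ and $v$ is a sequence of hyperedges $h_1,\dots,h_l$ with $u\in h_1$, $v\in h_l$, $h_j\cap h_{j+1}\neq\emptyset$; $\mathcal{H}$ is connected if all pairs of distinct vertices are connected by hyperpaths. For $u\ne v$, $d(u,v)=\inf_\gamma\sum_{h\in\gamma}w_h$ over hyperpaths connecting $u,v$; $d(u,u)=0$; $\mathrm{diam}(\mathcal{H})=\max_{u,v}d(u,v)$. $W(\mu,\nu)=\inf_\pi\sum_{x,y}\pi(x,y)d(x,y)$ over couplings $\pi$ of probability measures $\mu,\nu$ on $V$. For $\alpha\in[0,1]$: $\mu_x^\alpha(x)=\alpha$, $\mu_x^\alpha(z)=(1-\alpha)\sum_{h'\ni x,z}\frac{1}{|h'|-1}\frac{w_{h'}}{\mathrm{Deg}(x)}$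 for $z\in\Gamma(x)$, $0$ otherwise. For distinct $u,v$: $\kappa_\alpha(u,v)=1-W(\mu_u^\alpha,\mu_v^\alpha)/d(u,v)$, and the Lin–Lu–Yau curvature is $\kappa(u,v)=\lim_{\alpha\to1^-}\kappa_\alpha(u,v)/(1-\alpha)$ (this limit exists in $\mathbb{R}$). A pair $\{u,v\}$ of distinct vertices is well-transported if there is a hyperedge $h$ containing both with $d(u,v)=w_h$. *)

theory Defs
  imports Complex_Main
begin

definition hypergraph :: "'a set \<Rightarrow> 'a set set \<Rightarrow> ('a set \<Rightarrow> real) \<Rightarrow> bool" where
  "hypergraph V H w \<longleftrightarrow> finite V \<and> finite H \<and> (\<forall>h\<in>H. h \<subseteq> V \<and> w h > 0)"

definition hyperpath :: "'a set set \<Rightarrow> 'a set list \<Rightarrow> 'a \<Rightarrow> 'a \<Rightarrow> bool" where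
  "hyperpath H hs u v \<longleftrightarrow> hs \<noteq> [] \<and> set hs \<subseteq> H \<and> u \<in> hd hs \<and> v \<in> last hs \<and>
     (\<forall>j. Suc j < length hs \<longrightarrow> hs ! j \<inter> hs ! Suc j \<noteq> {})"

definition hconnected :: "'a set \<Rightarrow> 'a set set \<Rightarrow> bool" where
  "hconnected V H \<longleftrightarrow> (\<forall>u\<in>V. \<forall>v\<in>V. u \<noteq> v \<longrightarrow> (\<exists>hs. hyperpath H hs u v))"

definition hdist :: "'a set set \<Rightarrow> ('a set \<Rightarrow> real) \<Rightarrow> 'a \<Rightarrow> 'a \<Rightarrow> real" where
  "hdist H w u v = (if u = v then 0
     else Inf {sum_list (map w hs) | hs. hyperpath H hs u v})"

definition hdiam :: "'a set \<Rightarrow> 'a set set \<Rightarrow> ('a set \<Rightarrow> real) \<Rightarrow> real" where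
  "hdiam V H w = Max {hdist H w u v | u v. u \<in> V \<and> v \<in> V}"

definition hDeg :: "'a set set \<Rightarrow> ('a set \<Rightarrow> real) \<Rightarrow> 'a \<Rightarrow> real" where
  "hDeg H w x = (\<Sum>h\<in>{h\<in>H. x \<in> h}. w h)"

definition hmu :: "'a set set \<Rightarrow> ('a set \<Rightarrow> real) \<Rightarrow> real \<Rightarrow> 'a \<Rightarrow> 'a \<Rightarrow> real" where
  "hmu H w \<alpha> x z = (if z = x then \<alpha>
     else (1 - \<alpha>) * (\<Sum>h\<in>{h\<in>H. x \<in> h \<and> z \<in> h}. (1 / (real (card h) - 1)) * (w h / hDeg H w x)))"

definition coupling :: "'a set \<Rightarrow> ('a \<Rightarrow> real) \<Rightarrow> ('a \<Rightarrow> real) \<Rightarrow> ('a \<Rightarrow> 'a \<Rightarrow> real) \<Rightarrow> bool" where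
  "coupling V \<mu> \<nu> \<pi> \<longleftrightarrow> (\<forall>x y. \<pi> x y \<ge> 0) \<and> (\<forall>x y. (x \<notin> V \<or> y \<notin> V) \<longrightarrow> \<pi> x y = 0) \<and>
     (\<forall>x\<in>V. (\<Sum>y\<in>V. \<pi> x y) = \<mu> x) \<and> (\<forall>y\<in>V. (\<Sum>x\<in>V. \<pi> x y) = \<nu> y)"

definition wasserstein :: "'a set \<Rightarrow> 'a set set \<Rightarrow> ('a set \<Rightarrow> real) \<Rightarrow> ('a \<Rightarrow> real) \<Rightarrow> ('a \<Rightarrow> real) \<Rightarrow> real" where
  "wasserstein V H w \<mu> \<nu> = Inf {(\<Sum>x\<in>V. \<Sum>y\<in>V. \<pi> x y * hdist H w x y) | \<pi>. coupling V \<mu> \<nu> \<pi>}"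

definition kappa_alpha :: "'a set \<Rightarrow> 'a set set \<Rightarrow> ('a set \<Rightarrow> real) \<Rightarrow> real \<Rightarrow> 'a \<Rightarrow> 'a \<Rightarrow> real" where
  "kappa_alpha V H w \<alpha> u v = 1 - wasserstein V H w (hmu H w \<alpha> u) (hmu H w \<alpha> v) / hdist H w u v"

definition llycurv :: "'a set \<Rightarrow> 'a set set \<Rightarrow> ('a set \<Rightarrow> real) \<Rightarrow> 'a \<Rightarrow> 'a \<Rightarrow> real" where
  "llycurv V H w u v = Lim (at_left 1) (\<lambda>\<alpha>. kappa_alpha V H w \<alpha> u v / (1 - \<alpha>))"

definition well_transported :: "'a set set \<Rightarrow> ('a set \<Rightarrow> real) \<Rightarrow> 'a \<Rightarrow> 'a \<Rightarrow> bool" where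
  "well_transported H w u v \<longleftrightarrow> u \<noteq> v \<and> (\<exists>h\<in>H. u \<in> h \<and> v \<in> h \<and> hdist H w u v = w h)"

end

theory Submission
  imports Defs
begin

definition cost :: "'a set \<Rightarrow> 'a set set \<Rightarrow> ('a set \<Rightarrow> real) \<Rightarrow> ('a \<Rightarrow> 'a \<Rightarrow> real) \<Rightarrow> real" where
  "cost V H w \<pi> = (\<Sum>x\<in>V. \<Sum>y\<in>V. \<pi> x y * hdist H w x y)"

lemma hyperpath_append:
  assumes "hyperpath H p x y" "hyperpath H q y z"
  shows "hyperpath H (p @ q) x z"
proof -
  have pne: "p \<noteq> []" and qne: "q \<noteq> []" using assms unfolding hyperpath_def by auto
  have "hs \<noteq> [] \<Longrightarrow> hs ! (length hs - 1) = last hs" for hs :: "'a set list" by (simp add: last_conv_nth)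
  show ?thesis unfolding hyperpath_def
  proof (intro conjI allI impI)
    show "p @ q \<noteq> []" using pne by simp
    show "set (p @ q) \<subseteq> H" using assms unfolding hyperpath_def by auto
    show "x \<in> hd (p @ q)" using assms pne unfolding hyperpath_def by auto
    show "z \<in> last (p @ q)" using assms qne unfolding hyperpath_def by auto
    fix j assume j: "Suc j < length (p @ q)"
    consider "Suc j < length p" | "Suc j = length p" | "j \<ge> length p" by linarith
    then show "(p @ q) ! j \<inter> (p @ q) ! Suc j \<noteq> {}"
    proof cases
      case 1 then show ?thesis using assms(1) unfolding hyperpath_def by (simp add: nth_append)
    next
      case 2
      then have "(p @ q) ! j = last p" using pne by (simp add: nth_append last_conv_nth flip: \<open>Suc j = length p\<close>)
      moreover have "(p @ q) ! Suc j = hd q" using 2 qne by (simp add: nth_append hd_conv_nth)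
      ultimately show ?thesis using assms unfolding hyperpath_def by auto
    next
      case 3
      then obtain k where k: "j = length p + k" using le_Suc_ex by blast
      have "Suc k < length q" using j k by simp
      then show ?thesis using assms(2) k unfolding hyperpath_def by (simp add: nth_append)
    qed
  qed
qed

lemma hyperpath_tl:
  assumes "hyperpath H (h # rest) x z" "rest \<noteq> []" "y \<in> h \<inter> hd rest"
  shows "hyperpath H rest y z"
  using assms unfolding hyperpath_def
  by (auto simp: hd_conv_nth) (metis Suc_less_eq length_Cons nth_Cons_Suc)

locale hg =
  fixes V :: "'a set" and H :: "'a set set" and w :: "'a set \<Rightarrow> real"
  assumes hyp: "hypergraph V H w" and conn: "hconnected V H" and Hne: "H \<noteq> {}"
    and card2: "\<forall>h\<in>H. card h \<ge> 2"
begin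

lemma finV: "finite V" and finH: "finite H" and hsub: "h \<in> H \<Longrightarrow> h \<subseteq> V"
  and wpos: "h \<in> H \<Longrightarrow> w h > 0"
  using hyp unfolding hypergraph_def by auto

definition M where "M = Max (w ` H)"
definition m where "m = Min (w ` H)"

lemma M_ge: "h \<in> H \<Longrightarrow> w h \<le> M" unfolding M_def using finH by auto
lemma m_le: "h \<in> H \<Longrightarrow> m \<le> w h" unfolding m_def using finH by auto
lemma m_pos: "m > 0" unfolding m_def using finH Hne wpos by auto

lemma path_sum_nonneg: "set hs \<subseteq> H \<Longrightarrow> 0 \<le> sum_list (map w hs)"
  by (induction hs) (auto intro!: add_nonneg_nonneg less_imp_le[OF wpos])

lemma path_sum_len: "set hs \<subseteq> H \<Longrightarrow> real (length hs) * m \<le> sum_list (map w hs)"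
  by (induction hs) (auto simp: algebra_simps intro: add_mono m_le)

lemma path_sum_ge_m: "hyperpath H hs x y \<Longrightarrow> m \<le> sum_list (map w hs)"
  unfolding hyperpath_def
  by (cases hs) (auto intro!: add_increasing2 path_sum_nonneg m_le)

abbreviation "d \<equiv> hdist H w"

lemma paths_ne: "x \<in> V \<Longrightarrow> y \<in> V \<Longrightarrow> x \<noteq> y \<Longrightarrow> \<exists>hs. hyperpath H hs x y"
  using conn unfolding hconnected_def by auto

lemma bdd: "bdd_below {sum_list (map w hs) | hs. hyperpath H hs x y}"
  by (rule bdd_belowI[of _ 0]) (auto simp: hyperpath_def intro!: path_sum_nonneg)

lemma d_le_path: "hyperpath H hs x y \<Longrightarrow> d x y \<le> sum_list (map w hs)"
proof (cases "x = y")
  case True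
  assume "hyperpath H hs x y"
  then show ?thesis using True unfolding hdist_def hyperpath_def by (auto intro!: path_sum_nonneg)
next
  case False
  assume "hyperpath H hs x y"
  then show ?thesis using False unfolding hdist_def by (auto intro!: cInf_lower bdd)
qed

lemma d_ge_m: "x \<in> V \<Longrightarrow> y \<in> V \<Longrightarrow> x \<noteq> y \<Longrightarrow> m \<le> d x y"
  unfolding hdist_def using paths_ne[of x y]
  by (auto intro!: cInf_greatest path_sum_ge_m)

lemma d_pos: "x \<in> V \<Longrightarrow> y \<in> V \<Longrightarrow> x \<noteq> y \<Longrightarrow> 0 < d x y"
  using d_ge_m m_pos by fastforce

lemma d_nonneg: "x \<in> V \<Longrightarrow> y \<in> V \<Longrightarrow> 0 \<le> d x y"
  using d_pos[of x y] by (cases "x = y") (auto simp: hdist_def)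

lemma d_refl[simp]: "d x x = 0" by (simp add: hdist_def)

lemma d_edge: "h \<in> H \<Longrightarrow> x \<in> h \<Longrightarrow> y \<in> h \<Longrightarrow> d x y \<le> w h"
  using d_le_path[of "[h]" x y] by (simp add: hyperpath_def)

lemma d_edge_M: "h \<in> H \<Longrightarrow> x \<in> h \<Longrightarrow> y \<in> h \<Longrightarrow> d x y \<le> M"
  using d_edge M_ge by fastforce

lemma d_tri: assumes "x \<in> V" "y \<in> V" "z \<in> V" shows "d x z \<le> d x y + d y z"
proof -
  consider "x = z" | "x = y" | "y = z" | "x \<noteq> z" "x \<noteq> y" "y \<noteq> z" by blast
  then show ?thesis
  proof cases
    case 1 then show ?thesis using d_nonneg assms by (simp add: add_nonneg_nonneg)
  next
    case 2 then show ?thesis by simp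
  next
    case 3 then show ?thesis by simp
  next
    case 4
    let ?P = "\<lambda>a b. {sum_list (map w hs) |hs. hyperpath H hs a b}"
    have dxy: "d x y = Inf (?P x y)" using 4 by (simp add: hdist_def)
    have dyz: "d y z = Inf (?P y z)" using 4 by (simp add: hdist_def)
    have ne: "?P x y \<noteq> {}" "?P y z \<noteq> {}" using 4 paths_ne assms by auto
    have key: "d x z - s \<le> d y z" if p: "hyperpath H p x y" "s = sum_list (map w p)" for p s
      unfolding dyz
    proof (rule cInf_greatest[OF ne(2)])
      fix t assume "t \<in> ?P y z"
      then obtain q where q: "hyperpath H q y z" "t = sum_list (map w q)" by auto
      have "d x z \<le> s + t" using d_le_path[OF hyperpath_append[OF p(1) q(1)]] p q by simp
      then show "d x z - s \<le> t" by simp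
    qed
    have "d x z - d y z \<le> d x y" unfolding dxy
    proof (rule cInf_greatest[OF ne(1)])
      fix s assume "s \<in> ?P x y"
      then obtain p where "hyperpath H p x y" "s = sum_list (map w p)" by auto
      from key[OF this] show "d x z - d y z \<le> s" by simp
    qed
    then show ?thesis by simp
  qed
qed

definition coef where "coef x h = (1 / (real (card h) - 1)) * (w h / hDeg H w x)"

definition P where
  "P x z = (if z = x then 0 else (\<Sum>h\<in>{h\<in>H. x \<in> h \<and> z \<in> h}. coef x h))"

lemma mu_eq: "hmu H w \<alpha> x z = \<alpha> * (if z = x then 1 else 0) + (1 - \<alpha>) * P x z"
  unfolding hmu_def P_def coef_def by simp

lemma exists_edge: assumes "x \<in> V" shows "\<exists>h\<in>H. x \<in> h"
proof -
  obtain h where h: "h \<in> H" using Hne by auto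
  have "2 \<le> card h" using card2 h by auto
  then have "\<exists>y\<in>h. y \<noteq> x"
  proof -
    have "\<not> h \<subseteq> {x}"
    proof
      assume "h \<subseteq> {x}"
      then have "card h \<le> card {x}" by (intro card_mono) auto
      then show False using \<open>2 \<le> card h\<close> by simp
    qed
    then show ?thesis by auto
  qed
  then obtain y where "y \<in> V" "y \<noteq> x" using hsub h by auto
  then obtain hs where "hyperpath H hs x y" using paths_ne assms by blast
  then show ?thesis unfolding hyperpath_def by (metis hd_in_set subsetD)
qed

lemma Deg_pos: assumes "x \<in> V" shows "hDeg H w x > 0"
proof -
  obtain h where h: "h \<in> H" "x \<in> h" using exists_edge assms by blast
  have "w h \<le> hDeg H w x" unfolding hDeg_def
    by (rule member_le_sum) (use h finH in \<open>auto intro: less_imp_le wpos\<close>)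
  then show ?thesis using wpos[OF h(1)] by simp
qed

lemma coef_pos: "h \<in> H \<Longrightarrow> 0 < 1 / (real (card h) - 1)"
  using card2 by fastforce

lemma coef_nonneg: "h \<in> H \<Longrightarrow> x \<in> V \<Longrightarrow> 0 \<le> coef x h"
  unfolding coef_def by (rule mult_nonneg_nonneg[OF less_imp_le[OF coef_pos] divide_nonneg_pos[OF less_imp_le[OF wpos] Deg_pos]])

lemma P_nonneg: "x \<in> V \<Longrightarrow> 0 \<le> P x z"
  unfolding P_def by (auto intro!: sum_nonneg coef_nonneg)

lemma P_sum: assumes x: "x \<in> V" shows "(\<Sum>z\<in>V. P x z) = 1"
proof -
  let ?c = "coef x"
  have "(\<Sum>z\<in>V. P x z) = (\<Sum>z\<in>V - {x}. \<Sum>h\<in>{h\<in>H. x \<in> h \<and> z \<in> h}. ?c h)"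
    using finV x by (simp add: P_def sum.remove[of V x] )
  also have "\<dots> = (\<Sum>h\<in>H. \<Sum>z\<in>{z\<in>V - {x}. x \<in> h \<and> z \<in> h}. ?c h)"
    using finV finH by (intro sum.swap_restrict) auto
  also have "\<dots> = (\<Sum>h\<in>H. if x \<in> h then w h / hDeg H w x else 0)"
  proof (rule sum.cong[OF refl])
    fix h assume h: "h \<in> H"
    show "(\<Sum>z\<in>{z\<in>V - {x}. x \<in> h \<and> z \<in> h}. ?c h) = (if x \<in> h then w h / hDeg H w x else 0)"
    proof (cases "x \<in> h")
      case True
      have fh: "finite h" using hsub[OF h] finV finite_subset by blast
      have "{z\<in>V - {x}. x \<in> h \<and> z \<in> h} = h - {x}" using True hsub[OF h] by auto
      moreover have "real (card (h - {x})) = real (card h) - 1"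
      proof -
        have "2 \<le> card h" using card2 h by auto
        then show ?thesis using True fh by (simp add: of_nat_diff card_Diff_singleton)
      qed
      moreover have "real (card h) - 1 \<noteq> 0" using card2 h by fastforce
      ultimately show ?thesis using True by (simp add: coef_def)
    qed simp
  qed
  also have "\<dots> = (\<Sum>h\<in>{h\<in>H. x \<in> h}. w h / hDeg H w x)"
    by (simp add: sum.inter_filter[OF finH])
  also have "\<dots> = (\<Sum>h\<in>{h\<in>H. x \<in> h}. w h) / hDeg H w x"
    by (simp add: sum_divide_distrib)
  also have "\<dots> = 1" using Deg_pos[OF x] by (simp add: hDeg_def)
  finally show ?thesis .
qed

lemma mu_nonneg: "x \<in> V \<Longrightarrow> 0 \<le> \<alpha> \<Longrightarrow> \<alpha> \<le> 1 \<Longrightarrow> 0 \<le> hmu H w \<alpha> x z"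
  unfolding mu_eq using P_nonneg by (auto intro!: add_nonneg_nonneg mult_nonneg_nonneg)

lemma mu_sum: assumes "x \<in> V" shows "(\<Sum>z\<in>V. hmu H w \<alpha> x z) = 1"
proof -
  have "(\<Sum>z\<in>V. hmu H w \<alpha> x z) = \<alpha> * (\<Sum>z\<in>V. (if z = x then 1 else 0)) + (1 - \<alpha>) * (\<Sum>z\<in>V. P x z)"
    unfolding mu_eq by (simp add: sum.distrib sum_distrib_left)
  also have "\<dots> = 1" using assms finV P_sum by simp
  finally show ?thesis .
qed

lemma P_d_le: assumes "x \<in> V" "z \<in> V" shows "P x z * d x z \<le> P x z * M" "P x z * d z x \<le> P x z * M"
proof -
  let ?c = "coef x"
  have c: "h \<in> H \<Longrightarrow> 0 \<le> ?c h" for h using coef_nonneg assms(1) by blast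
  show "P x z * d x z \<le> P x z * M"
  proof (cases "z = x")
    case False
    then show ?thesis unfolding P_def using False
      by (simp add: sum_distrib_right) (intro sum_mono mult_left_mono c d_edge_M; auto)
  qed (simp add: P_def)
  show "P x z * d z x \<le> P x z * M"
  proof (cases "z = x")
    case False
    then show ?thesis unfolding P_def using False
      by (simp add: sum_distrib_right) (intro sum_mono mult_left_mono c d_edge_M; auto)
  qed (simp add: P_def)
qed

lemma mu_d_bound: assumes "x \<in> V" "\<alpha> \<le> 1"
  shows "(\<Sum>z\<in>V. hmu H w \<alpha> x z * d x z) \<le> (1 - \<alpha>) * M"
    "(\<Sum>z\<in>V. hmu H w \<alpha> x z * d z x) \<le> (1 - \<alpha>) * M"
proof -
  have "(\<Sum>z\<in>V. hmu H w \<alpha> x z * d x z) = (1 - \<alpha>) * (\<Sum>z\<in>V. P x z * d x z)"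
    unfolding mu_eq by (auto simp: algebra_simps sum_distrib_left sum_subtractf intro!: sum.cong)
  also have "\<dots> \<le> (1 - \<alpha>) * (\<Sum>z\<in>V. P x z * M)"
    by (rule mult_left_mono, rule sum_mono) (use assms P_d_le in auto)
  also have "\<dots> = (1 - \<alpha>) * M" using P_sum assms by (simp add: sum_distrib_right[symmetric])
  finally show "(\<Sum>z\<in>V. hmu H w \<alpha> x z * d x z) \<le> (1 - \<alpha>) * M" .
  have "(\<Sum>z\<in>V. hmu H w \<alpha> x z * d z x) = (1 - \<alpha>) * (\<Sum>z\<in>V. P x z * d z x)"
    unfolding mu_eq by (auto simp: algebra_simps sum_distrib_left sum_subtractf intro!: sum.cong)
  also have "\<dots> \<le> (1 - \<alpha>) * (\<Sum>z\<in>V. P x z * M)"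
    by (rule mult_left_mono, rule sum_mono) (use assms P_d_le in auto)
  also have "\<dots> = (1 - \<alpha>) * M" using P_sum assms by (simp add: sum_distrib_right[symmetric])
  finally show "(\<Sum>z\<in>V. hmu H w \<alpha> x z * d z x) \<le> (1 - \<alpha>) * M" .
qed

definition pm where "pm \<mu> \<longleftrightarrow> (\<forall>x\<in>V. 0 \<le> \<mu> x) \<and> (\<Sum>x\<in>V. \<mu> x) = 1"

abbreviation "Wd \<equiv> wasserstein V H w"
abbreviation "cst \<equiv> cost V H w"

lemma W_def': "Wd \<mu> \<nu> = Inf {cst \<pi> | \<pi>. coupling V \<mu> \<nu> \<pi>}"
  unfolding wasserstein_def cost_def by simp

lemma cost_nonneg: "coupling V \<mu> \<nu> \<pi> \<Longrightarrow> 0 \<le> cst \<pi>"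
  unfolding cost_def coupling_def by (auto intro!: sum_nonneg mult_nonneg_nonneg d_nonneg)

lemma coupling_ex: assumes "pm \<mu>" "pm \<nu>"
  shows "coupling V \<mu> \<nu> (\<lambda>x y. if x \<in> V \<and> y \<in> V then \<mu> x * \<nu> y else 0)"
  using assms unfolding coupling_def pm_def
  by (auto simp: sum_distrib_left[symmetric] sum_distrib_right[symmetric])

lemma W_greatest: assumes "pm \<mu>" "pm \<nu>" "\<And>\<pi>. coupling V \<mu> \<nu> \<pi> \<Longrightarrow> c \<le> cst \<pi>"
  shows "c \<le> Wd \<mu> \<nu>"
  unfolding W_def' using coupling_ex[OF assms(1,2)] assms(3)
  by (intro cInf_greatest) auto

lemma W_le: "coupling V \<mu> \<nu> \<pi> \<Longrightarrow> Wd \<mu> \<nu> \<le> cst \<pi>"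
  unfolding W_def' by (rule cInf_lower) (auto intro!: bdd_belowI[of _ 0] cost_nonneg)

lemma W_nonneg: "pm \<mu> \<Longrightarrow> pm \<nu> \<Longrightarrow> 0 \<le> Wd \<mu> \<nu>"
  using W_greatest cost_nonneg by blast

lemma coupling_zero_col: assumes "coupling V \<mu> \<nu> \<pi>" "y \<in> V" "\<nu> y = 0" shows "\<pi> x y = 0"
proof (cases "x \<in> V")
  case True
  have "(\<Sum>x\<in>V. \<pi> x y) = 0" using assms unfolding coupling_def by auto
  then show ?thesis using True finV assms(1) unfolding coupling_def
    by (subst (asm) sum_nonneg_eq_0_iff) auto
qed (use assms in \<open>auto simp: coupling_def\<close>)

lemma coupling_zero_row: assumes "coupling V \<mu> \<nu> \<pi>" "x \<in> V" "\<mu> x = 0" shows "\<pi> x y = 0"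
proof (cases "y \<in> V")
  case True
  have "(\<Sum>y\<in>V. \<pi> x y) = 0" using assms unfolding coupling_def by auto
  then show ?thesis using True finV assms(1) unfolding coupling_def
    by (subst (asm) sum_nonneg_eq_0_iff) auto
qed (use assms in \<open>auto simp: coupling_def\<close>)

lemma W_tri: assumes "pm \<mu>" "pm \<nu>" "pm \<rho>"
  shows "Wd \<mu> \<rho> \<le> Wd \<mu> \<nu> + Wd \<nu> \<rho>"
proof -
  have main: "Wd \<mu> \<rho> \<le> cst \<pi>1 + cst \<pi>2" if c1: "coupling V \<mu> \<nu> \<pi>1" and c2: "coupling V \<nu> \<rho> \<pi>2" for \<pi>1 \<pi>2
  proof -
    define g where "g x y z = (if \<nu> y = 0 then 0 else \<pi>1 x y * \<pi>2 y z / \<nu> y)" for x y z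
    define \<pi> where "\<pi> x z = (if x \<in> V \<and> z \<in> V then \<Sum>y\<in>V. g x y z else 0)" for x z
    have g_nonneg: "0 \<le> g x y z" for x y z
      using c1 c2 assms(2) unfolding g_def coupling_def pm_def
      by (cases "y \<in> V") (auto intro!: divide_nonneg_pos mult_nonneg_nonneg simp: less_le)
    have gz: "y \<in> V \<Longrightarrow> (\<Sum>z\<in>V. g x y z) = \<pi>1 x y" for x y
    proof (cases "\<nu> y = 0")
      case True
      assume "y \<in> V" then show ?thesis using True coupling_zero_col[OF c1] by (simp add: g_def)
    next
      case False
      assume y: "y \<in> V"
      have "(\<Sum>z\<in>V. g x y z) = \<pi>1 x y * (\<Sum>z\<in>V. \<pi>2 y z) / \<nu> y"
        using False by (simp add: g_def sum_distrib_left sum_divide_distrib)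
      also have "\<dots> = \<pi>1 x y" using c2 y False unfolding coupling_def by simp
      finally show ?thesis .
    qed
    have gx: "y \<in> V \<Longrightarrow> (\<Sum>x\<in>V. g x y z) = \<pi>2 y z" for y z
    proof (cases "\<nu> y = 0")
      case True
      assume "y \<in> V" then show ?thesis using True coupling_zero_row[OF c2] by (simp add: g_def)
    next
      case False
      assume y: "y \<in> V"
      have "(\<Sum>x\<in>V. g x y z) = (\<Sum>x\<in>V. \<pi>1 x y) * \<pi>2 y z / \<nu> y"
        using False by (simp add: g_def sum_distrib_right sum_divide_distrib)
      also have "\<dots> = \<pi>2 y z" using c1 y False unfolding coupling_def by simp
      finally show ?thesis .
    qed
    have cp: "coupling V \<mu> \<rho> \<pi>"
      unfolding coupling_def
    proof (intro conjI ballI allI impI)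
      fix x z show "0 \<le> \<pi> x z" unfolding \<pi>_def using g_nonneg by (auto intro: sum_nonneg)
      show "x \<notin> V \<or> z \<notin> V \<Longrightarrow> \<pi> x z = 0" unfolding \<pi>_def by auto
    next
      fix x assume x: "x \<in> V"
      have "(\<Sum>z\<in>V. \<pi> x z) = (\<Sum>z\<in>V. \<Sum>y\<in>V. g x y z)" unfolding \<pi>_def using x by simp
      also have "\<dots> = (\<Sum>y\<in>V. \<Sum>z\<in>V. g x y z)" by (rule sum.swap)
      also have "\<dots> = (\<Sum>y\<in>V. \<pi>1 x y)" using gz by simp
      also have "\<dots> = \<mu> x" using c1 x unfolding coupling_def by simp
      finally show "(\<Sum>z\<in>V. \<pi> x z) = \<mu> x" .
    next
      fix z assume z: "z \<in> V"
      have "(\<Sum>x\<in>V. \<pi> x z) = (\<Sum>x\<in>V. \<Sum>y\<in>V. g x y z)" unfolding \<pi>_def using z by simp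
      also have "\<dots> = (\<Sum>y\<in>V. \<Sum>x\<in>V. g x y z)" by (rule sum.swap)
      also have "\<dots> = (\<Sum>y\<in>V. \<pi>2 y z)" using gx by simp
      also have "\<dots> = \<rho> z" using c2 z unfolding coupling_def by simp
      finally show "(\<Sum>x\<in>V. \<pi> x z) = \<rho> z" .
    qed
    have "cst \<pi> = (\<Sum>x\<in>V. \<Sum>z\<in>V. \<Sum>y\<in>V. g x y z * d x z)"
      unfolding cost_def \<pi>_def by (simp add: sum_distrib_right)
    also have "\<dots> \<le> (\<Sum>x\<in>V. \<Sum>z\<in>V. \<Sum>y\<in>V. g x y z * d x y + g x y z * d y z)"
      by (intro sum_mono) (simp add: distrib_left[symmetric] mult_left_mono g_nonneg d_tri)
    also have "\<dots> = (\<Sum>x\<in>V. \<Sum>z\<in>V. \<Sum>y\<in>V. g x y z * d x y) + (\<Sum>x\<in>V. \<Sum>z\<in>V. \<Sum>y\<in>V. g x y z * d y z)"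
      by (simp add: sum.distrib)
    also have "(\<Sum>x\<in>V. \<Sum>z\<in>V. \<Sum>y\<in>V. g x y z * d x y) = (\<Sum>x\<in>V. \<Sum>y\<in>V. (\<Sum>z\<in>V. g x y z) * d x y)"
    proof -
      have "(\<Sum>x\<in>V. \<Sum>z\<in>V. \<Sum>y\<in>V. g x y z * d x y) = (\<Sum>x\<in>V. \<Sum>y\<in>V. \<Sum>z\<in>V. g x y z * d x y)"
        by (intro sum.cong refl sum.swap)
      then show ?thesis by (simp add: sum_distrib_right)
    qed
    also have "\<dots> = cst \<pi>1" unfolding cost_def using gz by simp
    also have "(\<Sum>x\<in>V. \<Sum>z\<in>V. \<Sum>y\<in>V. g x y z * d y z) = (\<Sum>y\<in>V. \<Sum>z\<in>V. (\<Sum>x\<in>V. g x y z) * d y z)"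
    proof -
      have "(\<Sum>x\<in>V. \<Sum>z\<in>V. \<Sum>y\<in>V. g x y z * d y z) = (\<Sum>z\<in>V. \<Sum>x\<in>V. \<Sum>y\<in>V. g x y z * d y z)"
        by (rule sum.swap)
      also have "\<dots> = (\<Sum>z\<in>V. \<Sum>y\<in>V. \<Sum>x\<in>V. g x y z * d y z)"
        by (intro sum.cong refl sum.swap)
      also have "\<dots> = (\<Sum>y\<in>V. \<Sum>z\<in>V. \<Sum>x\<in>V. g x y z * d y z)"
        by (rule sum.swap)
      finally show ?thesis by (simp add: sum_distrib_right)
    qed
    also have "\<dots> = cst \<pi>2" unfolding cost_def using gx by simp
    finally have "cst \<pi> \<le> cst \<pi>1 + cst \<pi>2" .
    then show ?thesis using W_le[OF cp] by simp
  qed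
  have "Wd \<mu> \<rho> - Wd \<nu> \<rho> \<le> Wd \<mu> \<nu>"
  proof (rule W_greatest[OF assms(1,2)])
    fix \<pi>1 assume c1: "coupling V \<mu> \<nu> \<pi>1"
    have "Wd \<mu> \<rho> - cst \<pi>1 \<le> Wd \<nu> \<rho>"
      by (rule W_greatest[OF assms(2,3)]) (use main[OF c1] in force)
    then show "Wd \<mu> \<rho> - Wd \<nu> \<rho> \<le> cst \<pi>1" by simp
  qed
  then show ?thesis by simp
qed

lemma pm_mu: "x \<in> V \<Longrightarrow> 0 \<le> \<alpha> \<Longrightarrow> \<alpha> \<le> 1 \<Longrightarrow> pm (hmu H w \<alpha> x)"
  unfolding pm_def using mu_nonneg mu_sum by auto

abbreviation "Wa \<alpha> u v \<equiv> Wd (hmu H w \<alpha> u) (hmu H w \<alpha> v)"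

lemma W_lower_bound: assumes u: "u \<in> V" and v: "v \<in> V" and a: "0 \<le> \<alpha>" "\<alpha> \<le> 1"
  shows "d u v - 2 * (1 - \<alpha>) * M \<le> Wa \<alpha> u v"
proof (rule W_greatest[OF pm_mu[OF u a] pm_mu[OF v a]])
  fix \<pi> assume c: "coupling V (hmu H w \<alpha> u) (hmu H w \<alpha> v) \<pi>"
  let ?mu = "hmu H w \<alpha> u" and ?nu = "hmu H w \<alpha> v"
  have tri: "x \<in> V \<Longrightarrow> y \<in> V \<Longrightarrow> d u y - d u x \<le> d x y" for x y
    using d_tri[OF u, of x y] by simp
  have "(\<Sum>x\<in>V. \<Sum>y\<in>V. \<pi> x y * (d u y - d u x)) \<le> cst \<pi>"
    unfolding cost_def using c u
    by (intro sum_mono mult_left_mono tri) (auto simp: coupling_def)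
  moreover have "(\<Sum>x\<in>V. \<Sum>y\<in>V. \<pi> x y * (d u y - d u x)) =
      (\<Sum>y\<in>V. (\<Sum>x\<in>V. \<pi> x y) * d u y) - (\<Sum>x\<in>V. (\<Sum>y\<in>V. \<pi> x y) * d u x)"
  proof -
    have "(\<Sum>x\<in>V. \<Sum>y\<in>V. \<pi> x y * (d u y - d u x)) = (\<Sum>x\<in>V. \<Sum>y\<in>V. \<pi> x y * d u y) - (\<Sum>x\<in>V. \<Sum>y\<in>V. \<pi> x y * d u x)"
      by (simp add: right_diff_distrib sum_subtractf)
    also have "(\<Sum>x\<in>V. \<Sum>y\<in>V. \<pi> x y * d u y) = (\<Sum>y\<in>V. \<Sum>x\<in>V. \<pi> x y * d u y)" by (rule sum.swap)
    finally show ?thesis by (simp add: sum_distrib_right)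
  qed
  moreover have "(\<Sum>y\<in>V. (\<Sum>x\<in>V. \<pi> x y) * d u y) = (\<Sum>y\<in>V. ?nu y * d u y)"
    using c unfolding coupling_def by simp
  moreover have "(\<Sum>x\<in>V. (\<Sum>y\<in>V. \<pi> x y) * d u x) = (\<Sum>x\<in>V. ?mu x * d u x)"
    using c unfolding coupling_def by simp
  moreover have "(\<Sum>x\<in>V. ?mu x * d u x) \<le> (1 - \<alpha>) * M" using mu_d_bound(1)[OF u a(2)] .
  moreover have "d u v - (1 - \<alpha>) * M \<le> (\<Sum>y\<in>V. ?nu y * d u y)"
  proof -
    have "(\<Sum>y\<in>V. ?nu y * (d u v - d y v)) \<le> (\<Sum>y\<in>V. ?nu y * d u y)"
      using u v d_tri[OF u _ v] by (intro sum_mono mult_left_mono) (auto simp: algebra_simps intro!: mu_nonneg a)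
    moreover have "(\<Sum>y\<in>V. ?nu y * (d u v - d y v)) = d u v - (\<Sum>y\<in>V. ?nu y * d y v)"
      using mu_sum[OF v] by (simp add: right_diff_distrib sum_subtractf sum_distrib_right[symmetric])
    moreover have "(\<Sum>y\<in>V. ?nu y * d y v) \<le> (1 - \<alpha>) * M" using mu_d_bound(2)[OF v a(2)] .
    ultimately show ?thesis by linarith
  qed
  ultimately show "d u v - 2 * (1 - \<alpha>) * M \<le> cst \<pi>" by linarith
qed

lemma W_conv: assumes u: "u \<in> V" and v: "v \<in> V" and ab: "0 \<le> a" "a < b" "b < 1"
  shows "Wa b u v \<le> ((1 - b) / (1 - a)) * Wa a u v + (1 - (1 - b) / (1 - a)) * d u v"
proof -
  define t where "t = (1 - b) / (1 - a)"
  have t: "0 < t" "t < 1" using ab by (auto simp: t_def)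
  have ta: "t * (1 - a) = 1 - b" using ab by (simp add: t_def)
  have a1: "0 \<le> a" "a \<le> 1" "0 \<le> b" "b \<le> 1" using ab by auto
  define \<delta> where "\<delta> x y = (if x = u \<and> y = v then 1 else (0::real))" for x y
  have "(Wa b u v - (1 - t) * d u v) / t \<le> Wa a u v"
  proof (rule W_greatest[OF pm_mu[OF u a1(1,2)] pm_mu[OF v a1(1,2)]])
    fix \<pi> assume c: "coupling V (hmu H w a u) (hmu H w a v) \<pi>"
    define \<pi>' where "\<pi>' x y = t * \<pi> x y + (1 - t) * \<delta> x y" for x y
    have mub: "hmu H w b x z = t * hmu H w a x z + (1 - t) * (if z = x then 1 else 0)" for x z
    proof -
      have hb: "b = t * a + (1 - t)" using ta by (simp add: algebra_simps)
      show ?thesis unfolding mu_eq hb by (simp add: algebra_simps)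
    qed
    have c': "coupling V (hmu H w b u) (hmu H w b v) \<pi>'"
      unfolding coupling_def
    proof (intro conjI ballI allI impI)
      fix x y
      show "0 \<le> \<pi>' x y" unfolding \<pi>'_def \<delta>_def using c t unfolding coupling_def by auto
      show "x \<notin> V \<or> y \<notin> V \<Longrightarrow> \<pi>' x y = 0" unfolding \<pi>'_def \<delta>_def using c u v unfolding coupling_def by auto
    next
      fix x assume x: "x \<in> V"
      have "(\<Sum>y\<in>V. \<pi>' x y) = t * (\<Sum>y\<in>V. \<pi> x y) + (1 - t) * (\<Sum>y\<in>V. \<delta> x y)"
        unfolding \<pi>'_def by (simp add: sum.distrib sum_distrib_left)
      also have "(\<Sum>y\<in>V. \<delta> x y) = (if x = u then 1 else 0)" unfolding \<delta>_def using v finV by auto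
      finally show "(\<Sum>y\<in>V. \<pi>' x y) = hmu H w b u x" using c x unfolding coupling_def mub by auto
    next
      fix y assume y: "y \<in> V"
      have "(\<Sum>x\<in>V. \<pi>' x y) = t * (\<Sum>x\<in>V. \<pi> x y) + (1 - t) * (\<Sum>x\<in>V. \<delta> x y)"
        unfolding \<pi>'_def by (simp add: sum.distrib sum_distrib_left)
      also have "(\<Sum>x\<in>V. \<delta> x y) = (if y = v then 1 else 0)" unfolding \<delta>_def using u finV by auto
      finally show "(\<Sum>x\<in>V. \<pi>' x y) = hmu H w b v y" using c y unfolding coupling_def mub by auto
    qed
    have "cst \<pi>' = t * cst \<pi> + (1 - t) * (\<Sum>x\<in>V. \<Sum>y\<in>V. \<delta> x y * d x y)"
      unfolding cost_def \<pi>'_def by (simp add: distrib_right sum.distrib sum_distrib_left mult.assoc)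
    also have "(\<Sum>x\<in>V. \<Sum>y\<in>V. \<delta> x y * d x y) = d u v"
    proof -
      have "\<delta> x y * d x y = (if x = u then (if y = v then d u v else 0) else 0)" for x y
        unfolding \<delta>_def by auto
      then have "(\<Sum>y\<in>V. \<delta> x y * d x y) = (if x = u then d u v else 0)" for x
        using v finV by (cases "x = u") auto
      then show ?thesis using u finV by simp
    qed
    finally have "Wa b u v \<le> t * cst \<pi> + (1 - t) * d u v" using W_le[OF c'] by simp
    then show "(Wa b u v - (1 - t) * d u v) / t \<le> cst \<pi>" using t by (simp add: divide_le_eq algebra_simps)
  qed
  then show ?thesis using t by (simp add: divide_le_eq algebra_simps t_def[symmetric])
qed

lemma kappa_le: assumes u: "u \<in> V" and v: "v \<in> V" and uv: "u \<noteq> v" and a: "0 \<le> \<alpha>" "\<alpha> < 1"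
  shows "kappa_alpha V H w \<alpha> u v / (1 - \<alpha>) \<le> 2 * M / d u v"
proof -
  have D: "0 < d u v" using d_pos u v uv by blast
  have "d u v - 2 * (1 - \<alpha>) * M \<le> Wa \<alpha> u v" using W_lower_bound u v a by simp
  then have "(d u v - Wa \<alpha> u v) / d u v \<le> 2 * (1 - \<alpha>) * M / d u v" using D
    by (intro divide_right_mono) auto
  moreover have "1 - Wa \<alpha> u v / d u v = (d u v - Wa \<alpha> u v) / d u v" using D by (simp add: field_simps)
  ultimately have "1 - Wa \<alpha> u v / d u v \<le> 2 * (1 - \<alpha>) * M / d u v" by simp
  moreover have "2 * (1 - \<alpha>) * M / d u v = (1 - \<alpha>) * (2 * M / d u v)" by simp
  ultimately have "kappa_alpha V H w \<alpha> u v \<le> (1 - \<alpha>) * (2 * M / d u v)" unfolding kappa_alpha_def by linarith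
  then show ?thesis using a by (simp add: divide_le_eq mult.commute)
qed

lemma kappa_mono: assumes u: "u \<in> V" and v: "v \<in> V" and uv: "u \<noteq> v" and ab: "0 \<le> a" "a \<le> b" "b < 1"
  shows "kappa_alpha V H w a u v / (1 - a) \<le> kappa_alpha V H w b u v / (1 - b)"
proof (cases "a = b")
  case False
  then have ab': "a < b" using ab by simp
  define t where "t = (1 - b) / (1 - a)"
  have t: "0 < t" using ab' ab by (simp add: t_def)
  have D: "0 < d u v" using d_pos u v uv by blast
  have "Wa b u v \<le> t * Wa a u v + (1 - t) * d u v" using W_conv[OF u v ab(1) ab' ab(3)] by (simp add: t_def)
  then have "Wa b u v / d u v \<le> t * (Wa a u v / d u v) + (1 - t)" using D by (simp add: field_simps)
  then have "t * kappa_alpha V H w a u v \<le> kappa_alpha V H w b u v" unfolding kappa_alpha_def by (simp add: algebra_simps)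
  then have "t * kappa_alpha V H w a u v / (1 - b) \<le> kappa_alpha V H w b u v / (1 - b)" using ab
    by (simp add: divide_right_mono)
  moreover have "t * kappa_alpha V H w a u v / (1 - b) = kappa_alpha V H w a u v / (1 - a)"
  proof -
    have "t / (1 - b) = 1 / (1 - a)" using ab ab' by (simp add: t_def)
    then show ?thesis by (metis times_divide_eq_left times_divide_eq_right mult.commute mult_1)
  qed
  ultimately show ?thesis by simp
qed simp

end

lemma mono_lim:
  fixes g :: "real \<Rightarrow> real"
  assumes mono: "\<And>a b. 0 \<le> a \<Longrightarrow> a \<le> b \<Longrightarrow> b < 1 \<Longrightarrow> g a \<le> g b"
    and bnd: "\<And>a. 0 \<le> a \<Longrightarrow> a < 1 \<Longrightarrow> g a \<le> B"
  shows "(g \<longlongrightarrow> Sup (g ` {0..<1})) (at_left 1)"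
proof -
  let ?L = "Sup (g ` {0..<1})"
  have ne: "g ` {0..<1} \<noteq> {}" by auto
  have bdd: "bdd_above (g ` {0..<1})" using bnd by (auto intro!: bdd_aboveI)
  show ?thesis
  proof (rule order_tendstoI)
    fix a assume "a < ?L"
    then obtain x where x: "x \<in> {0..<1}" "a < g x" using less_cSup_iff[OF ne bdd] by auto
    have "eventually (\<lambda>y. y \<in> {x<..<1}) (at_left (1::real))"
      using x by (intro eventually_at_left_real) auto
    then show "eventually (\<lambda>y. a < g y) (at_left 1)"
    proof eventually_elim
      case (elim y)
      then have "g x \<le> g y" using x by (intro mono) auto
      then show ?case using x by simp
    qed
  next
    fix a assume "?L < a"
    have "eventually (\<lambda>y. y \<in> {0<..<1}) (at_left (1::real))"
      by (intro eventually_at_left_real) auto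
    then show "eventually (\<lambda>y. g y < a) (at_left 1)"
    proof eventually_elim
      case (elim y)
      then have "g y \<le> ?L" using bdd by (intro cSup_upper) auto
      then show ?case using \<open>?L < a\<close> by simp
    qed
  qed
qed

context hg begin

lemma curv_lim: assumes u: "u \<in> V" and v: "v \<in> V" and uv: "u \<noteq> v"
  shows "((\<lambda>\<alpha>. kappa_alpha V H w \<alpha> u v / (1 - \<alpha>)) \<longlongrightarrow> llycurv V H w u v) (at_left 1)"
    and "llycurv V H w u v \<le> 2 * M / d u v"
proof -
  let ?g = "\<lambda>\<alpha>. kappa_alpha V H w \<alpha> u v / (1 - \<alpha>)"
  have lim: "(?g \<longlongrightarrow> Sup (?g ` {0..<1})) (at_left 1)"
    by (rule mono_lim[where B = "2 * M / d u v"]) (use kappa_mono[OF u v uv] kappa_le[OF u v uv] in auto)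
  have eq: "llycurv V H w u v = Sup (?g ` {0..<1})"
    unfolding llycurv_def by (rule tendsto_Lim[OF _ lim]) simp
  show "(?g \<longlongrightarrow> llycurv V H w u v) (at_left 1)" using lim eq by simp
  show "llycurv V H w u v \<le> 2 * M / d u v" unfolding eq
    by (rule cSup_least) (use kappa_le[OF u v uv] in auto)
qed

lemma part1: assumes u: "u \<in> V" and v: "v \<in> V" and uv: "u \<noteq> v" and k: "llycurv V H w u v > 0"
  shows "d u v \<le> 2 * M / llycurv V H w u v"
proof -
  have D: "0 < d u v" using d_pos u v uv by blast
  have "llycurv V H w u v \<le> 2 * M / d u v" using curv_lim(2)[OF u v uv] .
  then have "llycurv V H w u v * d u v \<le> 2 * M" using D by (simp add: le_divide_eq)
  then show ?thesis using k by (simp add: le_divide_eq mult.commute)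
qed

lemma geodesic: assumes u: "u \<in> V" and v: "v \<in> V" and uv: "u \<noteq> v"
  shows "\<exists>hs. hyperpath H hs u v \<and> sum_list (map w hs) = d u v"
proof -
  let ?S = "{sum_list (map w hs) | hs. hyperpath H hs u v}"
  obtain p0 where p0: "hyperpath H p0 u v" using paths_ne u v uv by blast
  define B where "B = sum_list (map w p0)"
  define N where "N = nat \<lceil>B / m\<rceil>"
  let ?Q = "{hs. set hs \<subseteq> H \<and> length hs \<le> N} \<inter> {hs. hyperpath H hs u v}"
  let ?T = "(\<lambda>hs. sum_list (map w hs)) ` ?Q"
  have len: "hyperpath H hs u v \<Longrightarrow> sum_list (map w hs) \<le> B \<Longrightarrow> length hs \<le> N" for hs
  proof -
    assume hp: "hyperpath H hs u v" and le: "sum_list (map w hs) \<le> B"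
    have "real (length hs) * m \<le> B" using path_sum_len[of hs] hp le unfolding hyperpath_def by auto
    then have "real (length hs) \<le> B / m" using m_pos by (simp add: le_divide_eq)
    then have "real (length hs) \<le> \<lceil>B / m\<rceil>" by linarith
    then show "length hs \<le> N" unfolding N_def by linarith
  qed
  have finT: "finite ?T" using finite_lists_length_le[OF finH] by auto
  have p0Q: "p0 \<in> ?Q" using p0 len[OF p0] unfolding B_def hyperpath_def by auto
  then have neT: "?T \<noteq> {}" by blast
  obtain hs0 where hs0: "hs0 \<in> ?Q" "sum_list (map w hs0) = Min ?T"
    using Min_in[OF finT neT] by auto
  have "Inf ?S = sum_list (map w hs0)"
  proof (rule cInf_eq_minimum)
    show "sum_list (map w hs0) \<in> ?S" using hs0(1) by blast
  next
    fix s assume "s \<in> ?S"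
    then obtain hs where hs: "hyperpath H hs u v" "s = sum_list (map w hs)" by auto
    have B0: "Min ?T \<le> B" unfolding B_def using p0Q finT by (intro Min_le) auto
    show "sum_list (map w hs0) \<le> s"
    proof (cases "s \<le> B")
      case True
      have "set hs \<subseteq> H" using hs(1) unfolding hyperpath_def by auto
      then have "hs \<in> ?Q" using len[OF hs(1)] True hs by auto
      then show ?thesis using hs hs0 finT by (auto intro!: Min_le)
    next
      case False
      then show ?thesis using hs0 B0 by simp
    qed
  qed
  then show ?thesis using hs0 uv unfolding hdist_def by (intro exI[of _ hs0]) auto
qed

lemma combine: assumes u: "u \<in> V" and y: "y \<in> V" and v: "v \<in> V"
    and uy: "u \<noteq> y" and yv: "y \<noteq> v" and uv: "u \<noteq> v" and eq: "d u v = d u y + d y v"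
  shows "llycurv V H w u y * d u y + llycurv V H w y v * d y v \<le> llycurv V H w u v * d u v"
proof -
  let ?F = "\<lambda>x z \<alpha>. kappa_alpha V H w \<alpha> x z / (1 - \<alpha>) * d x z"
  have l1: "(?F u y \<longlongrightarrow> llycurv V H w u y * d u y) (at_left 1)"
    by (intro tendsto_mult_right curv_lim(1) u y uy)
  have l2: "(?F y v \<longlongrightarrow> llycurv V H w y v * d y v) (at_left 1)"
    by (intro tendsto_mult_right curv_lim(1) y v yv)
  have l3: "(?F u v \<longlongrightarrow> llycurv V H w u v * d u v) (at_left 1)"
    by (intro tendsto_mult_right curv_lim(1) u v uv)
  have F_eq: "?F x z \<alpha> = (d x z - Wa \<alpha> x z) / (1 - \<alpha>)" if "x \<in> V" "z \<in> V" "x \<noteq> z" for x z \<alpha>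
  proof -
    have "0 < d x z" using d_pos that by blast
    then have e: "kappa_alpha V H w \<alpha> x z * d x z = d x z - Wa \<alpha> x z"
      unfolding kappa_alpha_def by (simp add: algebra_simps)
    have "?F x z \<alpha> = (kappa_alpha V H w \<alpha> x z * d x z) / (1 - \<alpha>)" by (rule times_divide_eq_left)
    then show ?thesis using e by simp
  qed
  have ev: "eventually (\<lambda>\<alpha>. \<alpha> \<in> {0<..<(1::real)}) (at_left 1)"
    by (intro eventually_at_left_real) auto
  have "eventually (\<lambda>\<alpha>. ?F u y \<alpha> + ?F y v \<alpha> \<le> ?F u v \<alpha>) (at_left 1)"
    using ev
  proof eventually_elim
    case (elim \<alpha>)
    have a: "0 \<le> \<alpha>" "\<alpha> \<le> 1" "0 < 1 - \<alpha>" using elim by auto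
    have "Wa \<alpha> u v \<le> Wa \<alpha> u y + Wa \<alpha> y v"
      by (rule W_tri) (use pm_mu u y v a in auto)
    then have "(d u y - Wa \<alpha> u y) + (d y v - Wa \<alpha> y v) \<le> d u v - Wa \<alpha> u v" using eq by simp
    then have "(d u y - Wa \<alpha> u y) / (1 - \<alpha>) + (d y v - Wa \<alpha> y v) / (1 - \<alpha>) \<le> (d u v - Wa \<alpha> u v) / (1 - \<alpha>)"
      using a by (simp add: add_divide_distrib[symmetric] divide_right_mono)
    then show ?case unfolding F_eq[OF u y uy] F_eq[OF y v yv] F_eq[OF u v uv] .
  qed
  then show ?thesis
    by (intro tendsto_le[OF _ l3 tendsto_add[OF l1 l2]]) simp_all
qed

lemma chain:
  assumes wt: "\<forall>u\<in>V. \<forall>v\<in>V. well_transported H w u v \<longrightarrow> llycurv V H w u v \<ge> \<kappa>"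
  shows "hyperpath H hs u v \<Longrightarrow> u \<in> V \<Longrightarrow> v \<in> V \<Longrightarrow> u \<noteq> v \<Longrightarrow> sum_list (map w hs) = d u v
     \<Longrightarrow> \<kappa> \<le> llycurv V H w u v"
proof (induction hs arbitrary: u)
  case Nil
  then show ?case by (simp add: hyperpath_def)
next
  case (Cons h rest)
  have h: "h \<in> H" "u \<in> h" using Cons.prems(1) unfolding hyperpath_def by auto
  show ?case
  proof (cases "rest = []")
    case True
    then have "v \<in> h" using Cons.prems(1) unfolding hyperpath_def by auto
    then have "well_transported H w u v" using Cons.prems h True unfolding well_transported_def by auto
    then show ?thesis using wt Cons.prems by blast
  next
    case False
    have A: "\<forall>j. Suc j < length (h # rest) \<longrightarrow> (h # rest) ! j \<inter> (h # rest) ! Suc j \<noteq> {}"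
      using Cons.prems(1) unfolding hyperpath_def by blast
    have "(h # rest) ! 0 \<inter> (h # rest) ! Suc 0 \<noteq> {}" using False by (intro A[rule_format]) simp
    then have "h \<inter> hd rest \<noteq> {}" using False by (simp add: hd_conv_nth)
    then obtain y where y: "y \<in> h" "y \<in> hd rest" by blast
    have yV: "y \<in> V" using hsub h y by auto
    have rp: "hyperpath H rest y v" using hyperpath_tl[OF Cons.prems(1) False] y by auto
    have sum: "sum_list (map w (h # rest)) = w h + sum_list (map w rest)" by simp
    have mr: "m \<le> sum_list (map w rest)" using path_sum_ge_m[OF rp] .
    have wh: "0 < w h" using wpos h by auto
    have yu: "y \<noteq> u"
    proof
      assume "y = u"
      then have "d u v \<le> sum_list (map w rest)" using d_le_path[OF rp] by simp
      then show False using Cons.prems(5) sum wh by simp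
    qed
    have yv: "y \<noteq> v"
    proof
      assume "y = v"
      then have "d u v \<le> w h" using d_edge h y by simp
      then show False using Cons.prems(5) sum mr m_pos by simp
    qed
    have d1: "d u y \<le> w h" using d_edge h y by simp
    have d2: "d y v \<le> sum_list (map w rest)" using d_le_path[OF rp] .
    have d3: "d u v \<le> d u y + d y v" using d_tri Cons.prems(2,3) yV by blast
    have e1: "d u y = w h" and e2: "d y v = sum_list (map w rest)" using d1 d2 d3 Cons.prems(5) sum by linarith+
    have IH: "\<kappa> \<le> llycurv V H w y v" using Cons.IH[OF rp yV Cons.prems(3) yv e2[symmetric]] .
    have "well_transported H w u y" unfolding well_transported_def using yu h y e1 by auto
    then have k1: "\<kappa> \<le> llycurv V H w u y" using wt Cons.prems(2) yV by blast
    have duv: "d u v = d u y + d y v" using e1 e2 Cons.prems(5) sum by simp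
    have comb: "llycurv V H w u y * d u y + llycurv V H w y v * d y v \<le> llycurv V H w u v * d u v"
      using combine[OF Cons.prems(2) yV Cons.prems(3) yu[symmetric] yv Cons.prems(4) duv] .
    have p1: "0 < d u y" "0 < d y v" "0 < d u v" using d_pos Cons.prems yV yu yv by auto
    have "\<kappa> * d u v = \<kappa> * d u y + \<kappa> * d y v" using duv by (simp add: algebra_simps)
    also have "\<dots> \<le> llycurv V H w u y * d u y + llycurv V H w y v * d y v"
      using k1 IH p1 by (intro add_mono mult_right_mono) auto
    finally have "\<kappa> * d u v \<le> llycurv V H w u v * d u v" using comb by simp
    then show ?thesis using p1 by simp
  qed
qed

end

theorem mainTheorem4:
  fixes V :: "'a set" and H :: "'a set set" and w :: "'a set \<Rightarrow> real"
  assumes "hypergraph V H w"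
    and "hconnected V H"
    and "H \<noteq> {}"
    and "\<forall>h\<in>H. card h \<ge> 2"
  shows "(\<forall>u\<in>V. \<forall>v\<in>V. u \<noteq> v \<longrightarrow> llycurv V H w u v > 0 \<longrightarrow>
            hdist H w u v \<le> 2 * Max (w ` H) / llycurv V H w u v)
       \<and> (\<forall>\<kappa>::real. \<kappa> > 0 \<longrightarrow>
            (\<forall>u\<in>V. \<forall>v\<in>V. well_transported H w u v \<longrightarrow> llycurv V H w u v \<ge> \<kappa>) \<longrightarrow>
            hdiam V H w \<le> 2 * Max (w ` H) / \<kappa>)"
proof -
  interpret hg V H w using assms by unfold_locales auto
  have P1: "\<forall>u\<in>V. \<forall>v\<in>V. u \<noteq> v \<longrightarrow> llycurv V H w u v > 0 \<longrightarrow>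
            hdist H w u v \<le> 2 * Max (w ` H) / llycurv V H w u v"
    using part1 unfolding M_def by blast
  have Mpos: "0 < M" using Hne wpos M_ge by (meson ex_in_conv less_le_trans)
  have P2: "hdiam V H w \<le> 2 * Max (w ` H) / \<kappa>"
    if k: "\<kappa> > 0" and wt: "\<forall>u\<in>V. \<forall>v\<in>V. well_transported H w u v \<longrightarrow> llycurv V H w u v \<ge> \<kappa>" for \<kappa> :: real
  proof -
    have each: "d u v \<le> 2 * M / \<kappa>" if u: "u \<in> V" and v: "v \<in> V" for u v
    proof (cases "u = v")
      case True
      then show ?thesis using Mpos k by simp
    next
      case False
      obtain hs where hs: "hyperpath H hs u v" "sum_list (map w hs) = d u v"
        using geodesic[OF u v False] by blast
      have kk: "\<kappa> \<le> llycurv V H w u v" using chain[OF wt hs(1) u v False hs(2)] .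
      then have "0 < llycurv V H w u v" using k by simp
      then have "d u v \<le> 2 * M / llycurv V H w u v" using part1[OF u v False] by blast
      also have "\<dots> \<le> 2 * M / \<kappa>" using kk k Mpos by (intro divide_left_mono) auto
      finally show ?thesis .
    qed
    have eq: "{hdist H w u v | u v. u \<in> V \<and> v \<in> V} = (\<lambda>(u, v). d u v) ` (V \<times> V)" by auto
    obtain h where h: "h \<in> H" using Hne by auto
    have "card h \<ge> 2" using card2 h by auto
    then have "h \<noteq> {}" by auto
    then have Vne: "V \<noteq> {}" using hsub h by auto
    have "hdiam V H w \<le> 2 * M / \<kappa>" unfolding hdiam_def eq
      using finV Vne each by (subst Max_le_iff) auto
    then show ?thesis unfolding M_def .
  qed
  show ?thesis using P1 P2 by blast
qed

end
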